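(* Let $f_0,f_1$ be finitely supported probability distributions on a connected, locally finite graph $G$, and endow $G$ with the $W_1$-orientation with respect to $(f_0,f_1)$. Then every oriented path on $(G,\to)$ is a geodesic of $G$.
   Context: $d$ is the graph distance. A path of length $n$ is a sequence $\gamma(0),\dots,\gamma(n)$ of vertices with consecutive ones adjacent; $L(\gamma)=n$, $e_0(\gamma)=\gamma(0)$, $e_1(\gamma)=\gamma(n)$; it is a geodesic if $n=d(\gamma(0),\gamma(n))$. A probability distribution is $f:G\to[0,\infty)$ with $\sum_xf(x)=1$. $\Pi_1(f_0,f_1)$ is the set of couplings $\pi$ of $f_0,f_1$ (nonnegative functions on $G\times G$ with marginals $f_0,f_1$) minimizing $\sum d(x,y)\pi(x,y)$; $\mathcal{C}(f_0,f_1)=\{(x,y):\pi(x,y)>0\text{ for some }\pi\in\Pi_1(f_0,f_1)\}$. The $W_1$-orientation with respect to $(f_0,f_1)$: for adjacent $x,y$, $x\to y$ iff there exist a geodesic $\gamma$ with $(e_0(\gamma),e_1(\gamma))\in\mathcal{C}(f_0,f_1)$ and $k\in\{0,\dots,L(\gamma)-1\}$ with $\gamma(k)=x,\gamma(k+1)=y$. An oriented path is a path with $\gamma(i)\to\gamma(i+1)$ for each $i$. *)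

theory Defs
  imports "HOL-Analysis.Analysis"
begin

text \<open>A graph: vertex set = the type 'a, adjacency relation E (symmetric, irreflexive).
  A path of length n is gamma 0, ..., gamma n with consecutive vertices adjacent.\<close>

definition is_path :: "('a \<Rightarrow> 'a \<Rightarrow> bool) \<Rightarrow> (nat \<Rightarrow> 'a) \<Rightarrow> nat \<Rightarrow> bool" where
  "is_path E \<gamma> n \<longleftrightarrow> (\<forall>i<n. E (\<gamma> i) (\<gamma> (Suc i)))"

definition graph_connected :: "('a \<Rightarrow> 'a \<Rightarrow> bool) \<Rightarrow> bool" where
  "graph_connected E \<longleftrightarrow> (\<forall>x y. \<exists>\<gamma> n. is_path E \<gamma> n \<and> \<gamma> 0 = x \<and> \<gamma> n = y)"

definition locally_finite :: "('a \<Rightarrow> 'a \<Rightarrow> bool) \<Rightarrow> bool" where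
  "locally_finite E \<longleftrightarrow> (\<forall>x. finite {y. E x y})"

definition simple_graph :: "('a \<Rightarrow> 'a \<Rightarrow> bool) \<Rightarrow> bool" where
  "simple_graph E \<longleftrightarrow> (\<forall>x y. E x y \<longleftrightarrow> E y x) \<and> (\<forall>x. \<not> E x x)"

definition gdist :: "('a \<Rightarrow> 'a \<Rightarrow> bool) \<Rightarrow> 'a \<Rightarrow> 'a \<Rightarrow> nat" where
  "gdist E x y = (LEAST n. \<exists>\<gamma>. is_path E \<gamma> n \<and> \<gamma> 0 = x \<and> \<gamma> n = y)"

definition is_geodesic :: "('a \<Rightarrow> 'a \<Rightarrow> bool) \<Rightarrow> (nat \<Rightarrow> 'a) \<Rightarrow> nat \<Rightarrow> bool" where
  "is_geodesic E \<gamma> n \<longleftrightarrow> is_path E \<gamma> n \<and> n = gdist E (\<gamma> 0) (\<gamma> n)"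

definition fin_prob_dist :: "('a \<Rightarrow> real) \<Rightarrow> bool" where
  "fin_prob_dist f \<longleftrightarrow> (\<forall>x. f x \<ge> 0) \<and> finite {x. f x \<noteq> 0}
      \<and> (\<Sum>x\<in>{x. f x \<noteq> 0}. f x) = 1"

definition coupling :: "('a \<Rightarrow> real) \<Rightarrow> ('a \<Rightarrow> real) \<Rightarrow> ('a \<Rightarrow> 'a \<Rightarrow> real) \<Rightarrow> bool" where
  "coupling f0 f1 \<pi> \<longleftrightarrow> (\<forall>x y. \<pi> x y \<ge> 0)
      \<and> (\<forall>x. ((\<lambda>y. \<pi> x y) has_sum f0 x) UNIV)
      \<and> (\<forall>y. ((\<lambda>x. \<pi> x y) has_sum f1 y) UNIV)"

definition transport_cost :: "('a \<Rightarrow> 'a \<Rightarrow> bool) \<Rightarrow> ('a \<Rightarrow> 'a \<Rightarrow> real) \<Rightarrow> real" where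
  "transport_cost E \<pi> = (\<Sum>\<^sub>\<infinity>(x, y)\<in>UNIV. real (gdist E x y) * \<pi> x y)"

definition optimal_couplings ::
  "('a \<Rightarrow> 'a \<Rightarrow> bool) \<Rightarrow> ('a \<Rightarrow> real) \<Rightarrow> ('a \<Rightarrow> real) \<Rightarrow> ('a \<Rightarrow> 'a \<Rightarrow> real) set" where
  "optimal_couplings E f0 f1 = {\<pi>. coupling f0 f1 \<pi> \<and>
      (\<forall>\<sigma>. coupling f0 f1 \<sigma> \<longrightarrow> transport_cost E \<pi> \<le> transport_cost E \<sigma>)}"

definition coupled_pairs :: "('a \<Rightarrow> 'a \<Rightarrow> bool) \<Rightarrow> ('a \<Rightarrow> real) \<Rightarrow> ('a \<Rightarrow> real) \<Rightarrow> ('a \<times> 'a) set" where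
  "coupled_pairs E f0 f1 = {(x, y). \<exists>\<pi>\<in>optimal_couplings E f0 f1. \<pi> x y > 0}"

definition W1_orient :: "('a \<Rightarrow> 'a \<Rightarrow> bool) \<Rightarrow> ('a \<Rightarrow> real) \<Rightarrow> ('a \<Rightarrow> real) \<Rightarrow> 'a \<Rightarrow> 'a \<Rightarrow> bool" where
  "W1_orient E f0 f1 x y \<longleftrightarrow> E x y \<and>
     (\<exists>\<gamma> n k. is_geodesic E \<gamma> n \<and> (\<gamma> 0, \<gamma> n) \<in> coupled_pairs E f0 f1
        \<and> k < n \<and> \<gamma> k = x \<and> \<gamma> (Suc k) = y)"

definition oriented_path :: "('a \<Rightarrow> 'a \<Rightarrow> bool) \<Rightarrow> ('a \<Rightarrow> real) \<Rightarrow> ('a \<Rightarrow> real) \<Rightarrow> (nat \<Rightarrow> 'a) \<Rightarrow> nat \<Rightarrow> bool" where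
  "oriented_path E f0 f1 \<gamma> n \<longleftrightarrow> is_path E \<gamma> n \<and> (\<forall>i<n. W1_orient E f0 f1 (\<gamma> i) (\<gamma> (Suc i)))"

end

theory Submission
  imports Defs
begin

lemma path_prefix: "is_path E g l \<Longrightarrow> k \<le> l \<Longrightarrow> is_path E g k"
  unfolding is_path_def by auto

lemma path_suffix: "is_path E g l \<Longrightarrow> k \<le> l \<Longrightarrow> is_path E (\<lambda>i. g (i+k)) (l-k)"
  unfolding is_path_def by auto

lemma gdist_le: "is_path E g l \<Longrightarrow> gdist E (g 0) (g l) \<le> l"
  unfolding gdist_def by (rule Least_le) blast

lemma gdist_path: "graph_connected E \<Longrightarrow>
   \<exists>g. is_path E g (gdist E x y) \<and> g 0 = x \<and> g (gdist E x y) = y"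
  unfolding gdist_def graph_connected_def by (rule LeastI_ex) blast

lemma gdist_tri:
  assumes "graph_connected E"
  shows "gdist E x z \<le> gdist E x y + gdist E y z"
proof -
  define a where "a = gdist E x y"
  define b where "b = gdist E y z"
  obtain \<alpha> where \<alpha>: "is_path E \<alpha> a" "\<alpha> 0 = x" "\<alpha> a = y"
    using gdist_path[OF assms, of x y] a_def by blast
  obtain \<beta> where \<beta>: "is_path E \<beta> b" "\<beta> 0 = y" "\<beta> b = z"
    using gdist_path[OF assms, of y z] b_def by blast
  define c where "c i = (if i \<le> a then \<alpha> i else \<beta> (i - a))" for i
  have c2: "c i = \<beta> (i - a)" if "i \<ge> a" for i
    using that \<alpha> \<beta> by (auto simp: c_def)
  have "is_path E c (a+b)"
    unfolding is_path_def
  proof (intro allI impI)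
    fix i assume i: "i < a + b"
    show "E (c i) (c (Suc i))"
    proof (cases "i < a")
      case True then show ?thesis using \<alpha>(1) by (auto simp: c_def is_path_def)
    next
      case False
      then have "c i = \<beta> (i - a)" "c (Suc i) = \<beta> (Suc (i - a))" using c2 by (auto simp: Suc_diff_le)
      then show ?thesis using \<beta>(1) i False by (auto simp: is_path_def)
    qed
  qed
  from gdist_le[OF this] have "gdist E (c 0) (c (a+b)) \<le> a + b" .
  moreover have "c 0 = x" using \<alpha> by (simp add: c_def)
  moreover have "c (a+b) = z" using c2[of "a+b"] \<beta> by simp
  ultimately show ?thesis by (simp add: a_def b_def)
qed

lemma has_sum_sum_fin:
  fixes f :: "'i \<Rightarrow> 'b \<Rightarrow> real"
  assumes "finite J" "\<And>j. j \<in> J \<Longrightarrow> (f j has_sum s j) A"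
  shows "((\<lambda>x. \<Sum>j\<in>J. f j x) has_sum (\<Sum>j\<in>J. s j)) A"
  using assms by (induction J rule: finite_induct) (auto intro!: has_sum_add)

lemma has_sum_single: "((\<lambda>v. if v = b then c else 0) has_sum (c::real)) UNIV"
  by (rule has_sum_finite_neutralI[of "{b}"]) auto

lemma coupling_le0:
  assumes "coupling f0 f1 \<pi>"
  shows "\<pi> u v \<le> f0 u" "\<pi> u v \<le> f1 v"
proof -
  have nn: "\<And>x y. \<pi> x y \<ge> 0" using assms by (simp add: coupling_def)
  have r: "((\<lambda>y. \<pi> u y) has_sum f0 u) UNIV" and c: "((\<lambda>x. \<pi> x v) has_sum f1 v) UNIV"
    using assms by (auto simp: coupling_def)
  show "\<pi> u v \<le> f0 u"
    by (rule has_sum_mono_neutral[OF has_sum_single[of v "\<pi> u v"] r]) (auto simp: nn)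
  show "\<pi> u v \<le> f1 v"
    by (rule has_sum_mono_neutral[OF has_sum_single[of u "\<pi> u v"] c]) (auto simp: nn)
qed

lemma coupling_supp:
  assumes "coupling f0 f1 \<pi>" "\<pi> u v \<noteq> 0"
  shows "f0 u \<noteq> 0" "f1 v \<noteq> 0"
proof -
  have "\<pi> u v > 0" using assms by (metis coupling_def order_le_less)
  then show "f0 u \<noteq> 0" "f1 v \<noteq> 0" using coupling_le0[OF assms(1), of u v] by auto
qed

lemma cost_finite:
  assumes "coupling f0 f1 \<pi>" "finite {x. f0 x \<noteq> 0}" "finite {y. f1 y \<noteq> 0}"
  shows "transport_cost E \<pi> = (\<Sum>(u,v)\<in>{x. f0 x \<noteq> 0} \<times> {y. f1 y \<noteq> 0}. real (gdist E u v) * \<pi> u v)"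
  (is "_ = sum _ ?S")
proof -
  have "transport_cost E \<pi> = infsum (\<lambda>(u,v). real (gdist E u v) * \<pi> u v) ?S"
    unfolding transport_cost_def
    by (rule infsum_cong_neutral) (auto dest: coupling_supp[OF assms(1)])
  also have "\<dots> = sum (\<lambda>(u,v). real (gdist E u v) * \<pi> u v) ?S"
    using assms(2,3) by (intro infsum_finite finite_cartesian_product)
  finally show ?thesis .
qed

definition ind :: "'a \<Rightarrow> 'a \<Rightarrow> 'a \<Rightarrow> 'a \<Rightarrow> real" where
  "ind a b u v = (if u = a \<and> v = b then 1 else 0)"

lemma ind_row: "((\<lambda>v. ind a b u v) has_sum (if u = a then 1 else 0)) UNIV"
  using has_sum_single[of b "if u = a then 1 else 0"]
  by (simp add: ind_def if_distrib cong: if_cong)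

lemma ind_col: "((\<lambda>u. ind a b u v) has_sum (if v = b then 1 else 0)) UNIV"
  using has_sum_single[of a "if v = b then 1 else 0"]
  by (simp add: ind_def) (smt (verit, ccfv_SIG) has_sum_cong)

lemma ind_sum1:
  assumes "finite S" "(a,b) \<in> S"
  shows "(\<Sum>(u,v)\<in>S. g u v * ind a b u v) = g a b"
proof -
  have "(\<Sum>(u,v)\<in>S. g u v * ind a b u v) = (\<Sum>p\<in>S. if p = (a,b) then g a b else 0)"
    by (rule sum.cong) (auto simp: ind_def split: if_splits)
  also have "\<dots> = g a b" using assms by simp
  finally show ?thesis .
qed

lemma ind_sumJ:
  assumes "finite S" "finite J" "\<And>j. j \<in> J \<Longrightarrow> (a j, b j) \<in> S"
  shows "(\<Sum>(u,v)\<in>S. g u v * (\<Sum>j\<in>J. ind (a j) (b j) u v)) = (\<Sum>j\<in>J. g (a j) (b j))"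
proof -
  have "(\<Sum>(u,v)\<in>S. g u v * (\<Sum>j\<in>J. ind (a j) (b j) u v))
      = (\<Sum>(u,v)\<in>S. \<Sum>j\<in>J. g u v * ind (a j) (b j) u v)"
    by (simp add: sum_distrib_left split_def)
  also have "\<dots> = (\<Sum>j\<in>J. \<Sum>(u,v)\<in>S. g u v * ind (a j) (b j) u v)"
    unfolding split_def by (rule sum.swap)
  also have "\<dots> = (\<Sum>j\<in>J. g (a j) (b j))"
    by (rule sum.cong) (auto intro: ind_sum1 assms)
  finally show ?thesis .
qed

lemma has_sum_diff':
  fixes f g :: "'b \<Rightarrow> real"
  shows "(f has_sum a) A \<Longrightarrow> (g has_sum b) A \<Longrightarrow> ((\<lambda>x. f x - g x) has_sum (a - b)) A"
proof -
  assume f: "(f has_sum a) A" and g: "(g has_sum b) A"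
  show ?thesis using has_sum_add[OF f has_sum_uminusI[OF g]] by simp
qed

theorem theorem2p13:
  fixes E :: "'a \<Rightarrow> 'a \<Rightarrow> bool" and f0 f1 :: "'a \<Rightarrow> real"
    and \<gamma> :: "nat \<Rightarrow> 'a" and n :: nat
  assumes "simple_graph E" and "graph_connected E" and "locally_finite E"
    and "fin_prob_dist f0" and "fin_prob_dist f1"
    and "oriented_path E f0 f1 \<gamma> n"
  shows "is_geodesic E \<gamma> n"
proof -
  note conn = assms(2)
  have path: "is_path E \<gamma> n" and ori: "\<And>i. i < n \<Longrightarrow> W1_orient E f0 f1 (\<gamma> i) (\<gamma> (Suc i))"
    using assms(6) by (auto simp: oriented_path_def)
  have fin0: "finite {x. f0 x \<noteq> 0}" using assms(4) by (simp add: fin_prob_dist_def)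
  have fin1: "finite {x. f1 x \<noteq> 0}" using assms(5) by (simp add: fin_prob_dist_def)
  define D where "D = gdist E (\<gamma> 0) (\<gamma> n)"
  have Dle: "D \<le> n" using gdist_le[OF path] by (simp add: D_def)
  have "\<not> D < n"
  proof
    assume Dlt: "D < n"
    then obtain m where nm: "n = Suc m" by (cases n) auto
    have "\<forall>i\<in>{..<n}. \<exists>t. snd (snd t) \<in> optimal_couplings E f0 f1
       \<and> snd (snd t) (fst t) (fst (snd t)) > 0
       \<and> gdist E (fst t) (fst (snd t)) \<ge> gdist E (fst t) (\<gamma> i) + 1 + gdist E (\<gamma> (Suc i)) (fst (snd t))"
    proof
      fix i assume "i \<in> {..<n}"
      then have "W1_orient E f0 f1 (\<gamma> i) (\<gamma> (Suc i))" using ori by auto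
      then obtain g l k where g: "is_geodesic E g l" "(g 0, g l) \<in> coupled_pairs E f0 f1"
        "k < l" "g k = \<gamma> i" "g (Suc k) = \<gamma> (Suc i)"
        unfolding W1_orient_def by blast
      obtain \<pi> where \<pi>: "\<pi> \<in> optimal_couplings E f0 f1" "\<pi> (g 0) (g l) > 0"
        using g(2) unfolding coupled_pairs_def by auto
      have gp: "is_path E g l" and gl: "l = gdist E (g 0) (g l)" using g(1) by (auto simp: is_geodesic_def)
      have a: "gdist E (g 0) (g k) \<le> k"
        using gdist_le[OF path_prefix[OF gp, of k]] g(3) by simp
      have b: "gdist E (g (Suc k)) (g l) \<le> l - Suc k"
        using gdist_le[OF path_suffix[OF gp, of "Suc k"]] g(3) by simp
      have "gdist E (g 0) (g l) \<ge> gdist E (g 0) (\<gamma> i) + 1 + gdist E (\<gamma> (Suc i)) (g l)"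
        using a[unfolded g(4)] b[unfolded g(5)] g(3) gl by linarith
      then show "\<exists>t. snd (snd t) \<in> optimal_couplings E f0 f1
       \<and> snd (snd t) (fst t) (fst (snd t)) > 0
       \<and> gdist E (fst t) (fst (snd t)) \<ge> gdist E (fst t) (\<gamma> i) + 1 + gdist E (\<gamma> (Suc i)) (fst (snd t))"
        using \<pi> by (intro exI[of _ "(g 0, g l, \<pi>)"]) simp
    qed
    then obtain F where F: "\<forall>i\<in>{..<n}. snd (snd (F i)) \<in> optimal_couplings E f0 f1
       \<and> snd (snd (F i)) (fst (F i)) (fst (snd (F i))) > 0
       \<and> gdist E (fst (F i)) (fst (snd (F i))) \<ge> gdist E (fst (F i)) (\<gamma> i) + 1 + gdist E (\<gamma> (Suc i)) (fst (snd (F i)))"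
      by (metis bchoice)
    define x where "x i = fst (F i)" for i
    define y where "y i = fst (snd (F i))" for i
    define PP where "PP i = snd (snd (F i))" for i
    have opt: "\<And>i. i < n \<Longrightarrow> PP i \<in> optimal_couplings E f0 f1"
      and pos: "\<And>i. i < n \<Longrightarrow> PP i (x i) (y i) > 0"
      and geo: "\<And>i. i < n \<Longrightarrow> gdist E (x i) (y i) \<ge> gdist E (x i) (\<gamma> i) + 1 + gdist E (\<gamma> (Suc i)) (y i)"
      using F by (auto simp: x_def y_def PP_def)
    have cpl: "\<And>i. i < n \<Longrightarrow> coupling f0 f1 (PP i)"
      and optc: "\<And>i \<sigma>. i < n \<Longrightarrow> coupling f0 f1 \<sigma> \<Longrightarrow> transport_cost E (PP i) \<le> transport_cost E \<sigma>"
      using opt by (auto simp: optimal_couplings_def)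
    define c where "c = transport_cost E (PP 0)"
    have costPi: "\<And>i. i < n \<Longrightarrow> transport_cost E (PP i) = c"
      using optc cpl nm unfolding c_def by (meson order_antisym zero_less_Suc)
    define S where "S = {x. f0 x \<noteq> 0} \<times> {y. f1 y \<noteq> 0}"
    have finS: "finite S" using fin0 fin1 by (simp add: S_def)
    have cost: "\<And>\<pi>. coupling f0 f1 \<pi> \<Longrightarrow> transport_cost E \<pi> = (\<Sum>(u,v)\<in>S. real (gdist E u v) * \<pi> u v)"
      unfolding S_def using fin0 fin1 by (intro cost_finite) auto
    have xyS: "\<And>i. i < n \<Longrightarrow> x i \<in> {x. f0 x \<noteq> 0} \<and> y i \<in> {y. f1 y \<noteq> 0}"
      using coupling_supp[OF cpl] pos by (metis less_irrefl mem_Collect_eq)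
    have npos: "real n > 0" using nm by simp
    define P where "P u v = (\<Sum>i<n. PP i u v) / real n" for u v
    have cplP: "coupling f0 f1 P"
      unfolding coupling_def
    proof (intro conjI allI)
      fix u v show "0 \<le> P u v" unfolding P_def
        using cpl by (auto intro!: sum_nonneg divide_nonneg_nonneg simp: coupling_def)
    next
      fix u
      have "((\<lambda>v. \<Sum>i<n. PP i u v) has_sum (\<Sum>i<n. f0 u)) UNIV"
        by (rule has_sum_sum_fin) (use cpl in \<open>auto simp: coupling_def\<close>)
      from has_sum_divide_const[OF this, of "real n"]
      show "((\<lambda>v. P u v) has_sum f0 u) UNIV" using npos by (simp add: P_def)
    next
      fix v
      have "((\<lambda>u. \<Sum>i<n. PP i u v) has_sum (\<Sum>i<n. f1 v)) UNIV"
        by (rule has_sum_sum_fin) (use cpl in \<open>auto simp: coupling_def\<close>)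
      from has_sum_divide_const[OF this, of "real n"]
      show "((\<lambda>u. P u v) has_sum f1 v) UNIV" using npos by (simp add: P_def)
    qed
    have costP: "transport_cost E P = c"
    proof -
      have "transport_cost E P = (\<Sum>(u,v)\<in>S. real (gdist E u v) * P u v)" by (rule cost[OF cplP])
      also have "\<dots> = (\<Sum>i<n. \<Sum>(u,v)\<in>S. real (gdist E u v) * PP i u v) / real n"
        unfolding P_def by (simp add: split_def sum_divide_distrib sum_distrib_left sum.swap[of _ S])
      also have "\<dots> = (\<Sum>i<n. c) / real n"
        using costPi cost[OF cpl] by simp
      also have "\<dots> = c" using npos by simp
      finally show ?thesis .
    qed
    define \<Delta> where "\<Delta> u v = (\<Sum>j<m. ind (x (Suc j)) (y j) u v) + ind (x 0) (y m) u v
        - (\<Sum>j<Suc m. ind (x j) (y j) u v)" for u v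
    define \<epsilon> where "\<epsilon> = Min ((\<lambda>j. P (x j) (y j)) ` {..<n}) / real n"
    have Ppos: "\<And>j. j < n \<Longrightarrow> P (x j) (y j) > 0"
    proof -
      fix j assume j: "j < n"
      have "PP j (x j) (y j) \<le> (\<Sum>i<n. PP i (x j) (y j))"
        by (rule member_le_sum) (use j cpl in \<open>auto simp: coupling_def\<close>)
      then show "P (x j) (y j) > 0" using pos[OF j] npos unfolding P_def by simp
    qed
    have Pmin: "\<And>j. j < n \<Longrightarrow> real n * \<epsilon> \<le> P (x j) (y j)"
      unfolding \<epsilon>_def using npos by simp
    have "0 < Min ((\<lambda>j. P (x j) (y j)) ` {..<n})"
      using Ppos nm by (subst Min_gr_iff) auto
    then have epos: "\<epsilon> > 0" unfolding \<epsilon>_def using npos by simp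
    define P' where "P' u v = P u v + \<epsilon> * \<Delta> u v" for u v
    have cplP': "coupling f0 f1 P'"
      unfolding coupling_def
    proof (intro conjI allI)
      fix u v
      have s1: "0 \<le> (\<Sum>j<m. ind (x (Suc j)) (y j) u v) + ind (x 0) (y m) u v"
        by (auto intro!: sum_nonneg add_nonneg_nonneg simp: ind_def)
      have s2: "\<epsilon> * (\<Sum>j<Suc m. ind (x j) (y j) u v) \<le> P u v"
      proof (cases "\<exists>j<n. u = x j \<and> v = y j")
        case True
        then obtain j where j: "j < n" "u = x j" "v = y j" by blast
        have "(\<Sum>j<Suc m. ind (x j) (y j) u v) \<le> (\<Sum>j<Suc m. 1)"
          by (rule sum_mono) (simp add: ind_def)
        then have "\<epsilon> * (\<Sum>j<Suc m. ind (x j) (y j) u v) \<le> \<epsilon> * real n"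
          using epos nm by (intro mult_left_mono) auto
        also have "\<dots> \<le> P u v" using Pmin[OF j(1)] j by (simp add: mult.commute)
        finally show ?thesis .
      next
        case False
        then have "(\<Sum>j<Suc m. ind (x j) (y j) u v) = 0"
          using nm by (intro sum.neutral) (auto simp: ind_def)
        then show ?thesis using cplP by (simp add: coupling_def)
      qed
      have e1: "\<epsilon> * \<Delta> u v = \<epsilon> * ((\<Sum>j<m. ind (x (Suc j)) (y j) u v) + ind (x 0) (y m) u v)
          - \<epsilon> * (\<Sum>j<Suc m. ind (x j) (y j) u v)"
        unfolding \<Delta>_def by (simp only: right_diff_distrib)
      have e2: "0 \<le> \<epsilon> * ((\<Sum>j<m. ind (x (Suc j)) (y j) u v) + ind (x 0) (y m) u v)"
        using s1 epos by simp
      show "0 \<le> P' u v" unfolding P'_def using e1 e2 s2 by linarith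
    next
      fix u
      have "((\<lambda>v. \<Delta> u v) has_sum ((\<Sum>j<m. if u = x (Suc j) then 1 else 0) + (if u = x 0 then 1 else 0)
          - (\<Sum>j<Suc m. if u = x j then 1 else 0))) UNIV"
        unfolding \<Delta>_def
        by (intro has_sum_diff' has_sum_add has_sum_sum_fin ind_row) auto
      moreover have "(\<Sum>j<m. if u = x (Suc j) then 1 else 0) + (if u = x 0 then 1 else 0)
          - (\<Sum>j<Suc m. if u = x j then 1 else 0) = (0::real)"
        by (simp only: sum.lessThan_Suc_shift)
      ultimately have "((\<lambda>v. \<Delta> u v) has_sum 0) UNIV" by simp
      from has_sum_add[OF _ has_sum_cmult_right[OF this, of \<epsilon>], of "\<lambda>v. P u v" "f0 u"]
      show "((\<lambda>v. P' u v) has_sum f0 u) UNIV" using cplP by (simp add: P'_def coupling_def)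
    next
      fix v
      have "((\<lambda>u. \<Delta> u v) has_sum ((\<Sum>j<m. if v = y j then 1 else 0) + (if v = y m then 1 else 0)
          - (\<Sum>j<Suc m. if v = y j then 1 else 0))) UNIV"
        unfolding \<Delta>_def
        by (intro has_sum_diff' has_sum_add has_sum_sum_fin ind_col) auto
      moreover have "(\<Sum>j<m. if v = y j then 1 else 0) + (if v = y m then 1 else 0)
          - (\<Sum>j<Suc m. if v = y j then 1 else 0) = (0::real)"
        by simp
      ultimately have "((\<lambda>u. \<Delta> u v) has_sum 0) UNIV" by simp
      from has_sum_add[OF _ has_sum_cmult_right[OF this, of \<epsilon>], of "\<lambda>u. P u v" "f1 v"]
      show "((\<lambda>u. P' u v) has_sum f1 v) UNIV" using cplP by (simp add: P'_def coupling_def)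
    qed
    define g where "g u v = real (gdist E u v)" for u v
    have sumD: "(\<Sum>(u,v)\<in>S. g u v * \<Delta> u v) = (\<Sum>j<m. g (x (Suc j)) (y j)) + g (x 0) (y m)
         - (\<Sum>j<Suc m. g (x j) (y j))"
    proof -
      have "(\<Sum>(u,v)\<in>S. g u v * \<Delta> u v) = (\<Sum>(u,v)\<in>S. g u v * (\<Sum>j<m. ind (x (Suc j)) (y j) u v))
         + (\<Sum>(u,v)\<in>S. g u v * ind (x 0) (y m) u v) - (\<Sum>(u,v)\<in>S. g u v * (\<Sum>j<Suc m. ind (x j) (y j) u v))"
        unfolding \<Delta>_def by (simp add: split_def sum.distrib sum_subtractf ring_distribs)
      also have "\<dots> = (\<Sum>j<m. g (x (Suc j)) (y j)) + g (x 0) (y m) - (\<Sum>j<Suc m. g (x j) (y j))"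
        using xyS nm finS
        by (subst ind_sumJ, simp, simp, simp add: S_def, subst ind_sum1, simp, simp add: S_def,
            subst ind_sumJ, simp, simp, simp add: S_def, simp)
      finally show ?thesis .
    qed
    have ineq: "(\<Sum>j<m. gdist E (x (Suc j)) (y j)) + gdist E (x 0) (y m)
         < (\<Sum>j<Suc m. gdist E (x j) (y j))"
    proof -
      define A where "A j = gdist E (x j) (\<gamma> j)" for j
      define B where "B j = gdist E (\<gamma> (Suc j)) (y j)" for j
      have t1: "gdist E (x (Suc j)) (y j) \<le> A (Suc j) + B j" for j
        unfolding A_def B_def by (rule gdist_tri[OF conn])
      have t2: "gdist E (x 0) (y m) \<le> A 0 + D + B m"
        using gdist_tri[OF conn, of "x 0" "y m" "\<gamma> 0"] gdist_tri[OF conn, of "\<gamma> 0" "y m" "\<gamma> (Suc m)"]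
        unfolding A_def B_def D_def nm by linarith
      have "(\<Sum>j<m. gdist E (x (Suc j)) (y j)) + gdist E (x 0) (y m)
          \<le> (\<Sum>j<m. A (Suc j) + B j) + (A 0 + D + B m)"
        using t1 t2 by (intro add_mono sum_mono) auto
      also have "\<dots> = (\<Sum>j<Suc m. A j) + (\<Sum>j<Suc m. B j) + D"
        unfolding sum.lessThan_Suc_shift[of A] sum.lessThan_Suc[of B] sum.distrib by simp
      also have "\<dots> < (\<Sum>j<Suc m. A j) + (\<Sum>j<Suc m. B j) + Suc m"
        using Dlt nm by simp
      also have "\<dots> = (\<Sum>j<Suc m. A j + 1 + B j)"
        by (simp only: sum.distrib) simp
      also have "\<dots> \<le> (\<Sum>j<Suc m. gdist E (x j) (y j))"
        using geo nm unfolding A_def B_def by (intro sum_mono) auto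
      finally show ?thesis .
    qed
    have neg: "(\<Sum>(u,v)\<in>S. g u v * \<Delta> u v) < 0"
    proof -
      have "real ((\<Sum>j<m. gdist E (x (Suc j)) (y j)) + gdist E (x 0) (y m))
         < real (\<Sum>j<Suc m. gdist E (x j) (y j))"
        using ineq by linarith
      then show ?thesis using sumD by (simp add: g_def)
    qed
    have "transport_cost E P' = (\<Sum>(u,v)\<in>S. g u v * P u v) + \<epsilon> * (\<Sum>(u,v)\<in>S. g u v * \<Delta> u v)"
      unfolding cost[OF cplP'] P'_def g_def
      by (simp add: split_def sum.distrib sum_distrib_left ring_distribs mult.left_commute)
    also have "(\<Sum>(u,v)\<in>S. g u v * P u v) = c"
      using costP cost[OF cplP] by (simp add: g_def)
    finally have "transport_cost E P' < c"
      using neg epos by (simp add: mult_pos_neg)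
    moreover have "c \<le> transport_cost E P'"
      unfolding c_def using optc[OF _ cplP'] nm by simp
    ultimately show False by simp
  qed
  then have "D = n" using Dle by simp
  then show ?thesis using path by (simp add: is_geodesic_def D_def)
qed

end
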